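(* Let $\mu$ be a probability measure on $\mathcal{F}=\mathbb{R}^{\{0,\dots,T\}}$ whose first-coordinate marginal is $m_0$, and let $L(\mu)$ be the mean-field propagation of $\mu$ (defined in the context). Then $L(\mu)$ is absolutely continuous with respect to the free-dynamics law $P$ and $$\frac{dL(\mu)}{dP}(\eta)=\int\exp\frac{1}{\sigma^2}\sum_{t=0}^{T-1}\Big[-\tfrac12\xi(t+1)^2+\Phi_{t+1}(\eta)\,\xi(t+1)\Big]\,dg_\mu(\xi),$$ with $\Phi_{t+1}(\eta)=\eta(t+1)+\theta$ for the formal models (AF, BF) and $\Phi_{t+1}(\eta)=\eta(t+1)+\theta-\varphi[\eta(t)+\theta]$ for the IF model.
   Context: $T\ge1$; $\mathcal{F}=\mathbb{R}^{\{0,\dots,T\}}$. Parameters: threshold $\theta\in\mathbb{R}$, $\sigma>0$, a probability measure $m_0$ on $\mathbb{R}$, $\bar J\in\mathbb{R}$, $J>0$. Transfer function $f$: Heaviside (BF and IF models) or $f(x)=e^x/(1+e^x)$ (AF model). For IF: $\gamma\in(0,1)$, $\vartheta<0<\theta$, $\varphi(u)=\gamma u$ if $\vartheta/\gamma<u<\theta$ and $\varphi(u)=\vartheta$ otherwise. For $\mu$ a probability measure on $\mathcal{F}$, $g_\mu$ is the Gaussian law on $\mathbb{R}^T$ (coordinates $\xi(t+1)$, $t=0,\dots,T-1$) with mean $m_\mu(t+1)=\bar J\int f[\eta(t)]d\mu(\eta)$ and covariance $c_\mu(s+1,t+1)=J^2\int f[\eta(s)]f[\eta(t)]d\mu(\eta)$.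 Free law $P$: the law on $\mathcal{F}$ of the process $u(0)\sim m_0$, $u(t+1)=w(t+1)-\theta$ (formal models) or $u(t+1)=\varphi[u(t)+\theta]+w(t+1)-\theta$ (IF), with $w(1),\dots,w(T)$ i.i.d. $\mathcal{N}(0,\sigma^2)$ independent of $u(0)$. Mean-field propagation: for $\mu$ with first marginal $m_0$, take independent $u\sim\mu$, $w\sim\mathcal{N}(0,\sigma^2I_T)$, $v\sim g_\mu$; $L(\mu)$ is the law of the process $\vartheta(0)=u(0)$, $\vartheta(t+1)=v(t+1)+w(t+1)-\theta$ (formal models) or $\vartheta(t+1)=\varphi[\vartheta(t)+\theta]+v(t+1)+w(t+1)-\theta$ (IF model), $t=0,\dots,T-1$. *)

theory Defs
  imports "HOL-Probability.Probability"
begin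

text \<open>The three network models: analog formal (AF), binary formal (BF), integrate-and-fire (IF).\<close>
datatype model = AF | BF | IF

definition heaviside :: "real \<Rightarrow> real" where
  "heaviside x = (if x \<ge> 0 then 1 else 0)"

definition sigmoid :: "real \<Rightarrow> real" where
  "sigmoid x = exp x / (1 + exp x)"

definition transfer :: "model \<Rightarrow> real \<Rightarrow> real" where
  "transfer M = (if M = AF then sigmoid else heaviside)"

definition phi_IF :: "real \<Rightarrow> real \<Rightarrow> real \<Rightarrow> real \<Rightarrow> real" where
  "phi_IF \<gamma> vth \<theta> u = (if vth / \<gamma> < u \<and> u < \<theta> then \<gamma> * u else vth)"

definition leak :: "model \<Rightarrow> real \<Rightarrow> real \<Rightarrow> real \<Rightarrow> real \<Rightarrow> real" where
  "leak M \<gamma> vth \<theta> x = (if M = IF then phi_IF \<gamma> vth \<theta> (x + \<theta>) else 0)"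

fun traj :: "(real \<Rightarrow> real) \<Rightarrow> real \<Rightarrow> real \<Rightarrow> (nat \<Rightarrow> real) \<Rightarrow> nat \<Rightarrow> real" where
  "traj lk \<theta> x0 inp 0 = x0"
| "traj lk \<theta> x0 inp (Suc t) = lk (traj lk \<theta> x0 inp t) + inp (Suc t) - \<theta>"

text \<open>The trajectory space F = R^{0..T} and the noise/field space R^{1..T}.\<close>
definition Fsp :: "nat \<Rightarrow> (nat \<Rightarrow> real) measure" where
  "Fsp T = PiM {0..T} (\<lambda>_. lborel)"

definition Rsp :: "nat \<Rightarrow> (nat \<Rightarrow> real) measure" where
  "Rsp T = PiM {1..T} (\<lambda>_. lborel)"

definition Wnoise :: "nat \<Rightarrow> real \<Rightarrow> (nat \<Rightarrow> real) measure" where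
  "Wnoise T \<sigma> = PiM {1..T} (\<lambda>_. density lborel (normal_density 0 \<sigma>))"

text \<open>Gaussian law on R^{1..T} with mean m and covariance c, characterised by its
  characteristic function (degenerate covariances allowed).\<close>
definition is_gaussian :: "nat \<Rightarrow> (nat \<Rightarrow> real) \<Rightarrow> (nat \<Rightarrow> nat \<Rightarrow> real) \<Rightarrow> (nat \<Rightarrow> real) measure \<Rightarrow> bool" where
  "is_gaussian T m c g \<longleftrightarrow> prob_space g \<and> sets g = sets (Rsp T) \<and>
     (\<forall>u :: nat \<Rightarrow> real.
        (CLINT \<xi>|g. cis (\<Sum>t\<in>{1..T}. u t * \<xi> t)) =
        cis (\<Sum>t\<in>{1..T}. u t * m t) *
        complex_of_real (exp (- (1/2) * (\<Sum>s\<in>{1..T}. \<Sum>t\<in>{1..T}. u s * c s t * u t))))"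

definition gaussian_law :: "nat \<Rightarrow> (nat \<Rightarrow> real) \<Rightarrow> (nat \<Rightarrow> nat \<Rightarrow> real) \<Rightarrow> (nat \<Rightarrow> real) measure" where
  "gaussian_law T m c = (SOME g. is_gaussian T m c g)"

definition m_mu :: "model \<Rightarrow> real \<Rightarrow> (nat \<Rightarrow> real) measure \<Rightarrow> nat \<Rightarrow> real" where
  "m_mu M Jbar \<mu> k = Jbar * (\<integral>\<eta>. transfer M (\<eta> (k - 1)) \<partial>\<mu>)"

definition c_mu :: "model \<Rightarrow> real \<Rightarrow> (nat \<Rightarrow> real) measure \<Rightarrow> nat \<Rightarrow> nat \<Rightarrow> real" where
  "c_mu M J \<mu> s t = J\<^sup>2 * (\<integral>\<eta>. transfer M (\<eta> (s - 1)) * transfer M (\<eta> (t - 1)) \<partial>\<mu>)"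

definition g_mu :: "model \<Rightarrow> nat \<Rightarrow> real \<Rightarrow> real \<Rightarrow> (nat \<Rightarrow> real) measure \<Rightarrow> (nat \<Rightarrow> real) measure" where
  "g_mu M T Jbar J \<mu> = gaussian_law T (m_mu M Jbar \<mu>) (c_mu M J \<mu>)"

definition free_law :: "model \<Rightarrow> real \<Rightarrow> real \<Rightarrow> real \<Rightarrow> real \<Rightarrow> real measure \<Rightarrow> nat \<Rightarrow> (nat \<Rightarrow> real) measure" where
  "free_law M \<gamma> vth \<theta> \<sigma> m0 T =
     distr (m0 \<Otimes>\<^sub>M Wnoise T \<sigma>) (Fsp T)
       (\<lambda>(x0, w). restrict (traj (leak M \<gamma> vth \<theta>) \<theta> x0 w) {0..T})"

definition mf_prop :: "model \<Rightarrow> real \<Rightarrow> real \<Rightarrow> real \<Rightarrow> real \<Rightarrow> real \<Rightarrow> real \<Rightarrow> nat \<Rightarrow>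
    (nat \<Rightarrow> real) measure \<Rightarrow> (nat \<Rightarrow> real) measure" where
  "mf_prop M \<gamma> vth \<theta> \<sigma> Jbar J T \<mu> =
     distr ((\<mu> \<Otimes>\<^sub>M Wnoise T \<sigma>) \<Otimes>\<^sub>M g_mu M T Jbar J \<mu>) (Fsp T)
       (\<lambda>((u, w), v). restrict (traj (leak M \<gamma> vth \<theta>) \<theta> (u 0) (\<lambda>t. v t + w t)) {0..T})"

definition Phi :: "model \<Rightarrow> real \<Rightarrow> real \<Rightarrow> real \<Rightarrow> (nat \<Rightarrow> real) \<Rightarrow> nat \<Rightarrow> real" where
  "Phi M \<gamma> vth \<theta> \<eta> k = \<eta> k + \<theta> - leak M \<gamma> vth \<theta> (\<eta> (k - 1))"

end

theory Submission
  imports Defs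
begin

definition qf :: "nat set \<Rightarrow> (nat \<Rightarrow> nat \<Rightarrow> real) \<Rightarrow> (nat \<Rightarrow> real) \<Rightarrow> real" where
  "qf I c u = (\<Sum>s\<in>I. \<Sum>t\<in>I. u s * c s t * u t)"

lemma qf_insert:
  assumes "finite I" "i \<notin> I" "\<And>s t. c s t = c t s"
  shows "qf (insert i I) c u = u i * u i * c i i + 2 * u i * (\<Sum>j\<in>I. c i j * u j) + qf I c u"
proof -
  have "qf (insert i I) c u = (\<Sum>s\<in>insert i I. u s * c s i * u i + (\<Sum>t\<in>I. u s * c s t * u t))"
    unfolding qf_def using assms by (simp add: sum.insert)
  also have "\<dots> = (u i * c i i * u i + (\<Sum>t\<in>I. u i * c i t * u t)) +
      (\<Sum>s\<in>I. u s * c s i * u i + (\<Sum>t\<in>I. u s * c s t * u t))"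
    using assms by (simp add: sum.insert)
  also have "\<dots> = u i * u i * c i i + (\<Sum>t\<in>I. u i * c i t * u t) + (\<Sum>s\<in>I. u s * c s i * u i) + qf I c u"
    unfolding qf_def by (simp add: sum.distrib)
  also have "(\<Sum>s\<in>I. u s * c s i * u i) = (\<Sum>t\<in>I. u i * c i t * u t)"
    using assms(3) by (intro sum.cong) (auto simp: mult_ac)
  also have "(\<Sum>t\<in>I. u i * c i t * u t) = u i * (\<Sum>j\<in>I. c i j * u j)"
    by (simp add: sum_distrib_left mult_ac)
  finally show ?thesis by simp
qed

lemma qf_cong: "(\<And>s. s \<in> I \<Longrightarrow> u s = u' s) \<Longrightarrow> qf I c u = qf I c u'"
  unfolding qf_def by (intro sum.cong refl) auto

lemma qf_diff: "qf I (\<lambda>s t. c s t - a s * a t) u = qf I c u - (\<Sum>s\<in>I. a s * u s)^2"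
proof -
  have "(\<Sum>s\<in>I. a s * u s)^2 = (\<Sum>s\<in>I. \<Sum>t\<in>I. u s * (a s * a t) * u t)"
    by (simp add: power2_eq_square sum_product mult_ac)
  then show ?thesis unfolding qf_def by (simp add: algebra_simps sum_subtractf)
qed

lemma psd_decomp:
  assumes "finite I"
  shows "(\<And>s t. c s t = c t s) \<Longrightarrow> (\<And>u. qf I c u \<ge> 0) \<Longrightarrow>
    \<exists>A. \<forall>s\<in>I. \<forall>t\<in>I. c s t = (\<Sum>j\<in>I. A s j * A t j)"
  using assms
proof (induction I arbitrary: c rule: finite_induct)
  case empty
  then show ?case by auto
next
  case (insert i I)
  define d where "d = c i i"
  have qz: "qf I c u = 0" if "\<And>x. x \<in> I \<Longrightarrow> u x = 0" for u
    using qf_cong[of I u "\<lambda>_. 0" c] that by (simp add: qf_def)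
  have d0: "d \<ge> 0"
  proof -
    let ?u = "\<lambda>x. if x = i then 1 else (0::real)"
    have "(\<Sum>j\<in>I. c i j * ?u j) = 0" using insert.hyps by (intro sum.neutral) auto
    moreover have "qf I c ?u = 0" using insert.hyps by (intro qz) auto
    ultimately show ?thesis using insert.prems(2)[of ?u]
      by (simp add: qf_insert[OF insert.hyps insert.prems(1)] d_def)
  qed
  define a where "a s = (if d = 0 then 0 else c i s / sqrt d)" for s
  have ci0: "c i t = 0" if "d = 0" "t \<in> I" for t
  proof (rule ccontr)
    assume ne: "c i t \<noteq> 0"
    define l where "l = - (c t t + 1) / (2 * c i t)"
    define u where "u x = (if x = i then l else if x = t then 1 else 0)" for x
    have "(\<Sum>j\<in>I. c i j * u j) = (\<Sum>j\<in>I. if j = t then c i t else 0)"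
      using insert.hyps by (intro sum.cong) (auto simp: u_def)
    then have s1: "(\<Sum>j\<in>I. c i j * u j) = c i t" using that insert.hyps by simp
    have "qf I c u = qf I c (\<lambda>x. if x = t then 1 else 0)"
      using insert.hyps by (intro qf_cong) (auto simp: u_def)
    also have "\<dots> = (\<Sum>s\<in>I. if s = t then c t t else 0)"
      unfolding qf_def using that insert.hyps by (intro sum.cong refl) (simp add: if_distrib cong: if_cong)
    finally have "qf I c u = c t t" using that insert.hyps by simp
    with s1 have "qf (insert i I) c u = 2 * l * c i t + c t t"
      using that by (simp add: qf_insert[OF insert.hyps insert.prems(1)] d_def u_def)
    also have "\<dots> = -1" using ne by (simp add: l_def field_simps)
    finally show False using insert.prems(2)[of u] by simp
  qed
  define c' where "c' s t = c s t - a s * a t" for s t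
  have "\<forall>u. qf I c' u \<ge> 0"
  proof
    fix u
    define b where "b = (\<Sum>j\<in>I. c i j * u j)"
    define u' where "u' = u(i := (if d = 0 then 0 else - b / d))"
    have ui: "u' i = (if d = 0 then 0 else - b / d)" by (simp add: u'_def)
    have qI: "qf I c u' = qf I c u" using insert.hyps by (intro qf_cong) (auto simp: u'_def)
    have bI: "(\<Sum>j\<in>I. c i j * u' j) = b" unfolding b_def using insert.hyps
      by (intro sum.cong) (auto simp: u'_def)
    have bI2: "(\<Sum>j\<in>I. u' j * c i j) = b" using bI by (simp add: mult.commute)
    have aI: "(\<Sum>s\<in>I. a s * u s) = (if d = 0 then 0 else b / sqrt d)"
      by (auto simp: a_def b_def sum_divide_distrib)
    have "qf I c' u = qf I c u - (if d = 0 then 0 else b^2 / d)"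
      unfolding c'_def qf_diff aI using d0 by (auto simp: power_divide)
    also have "\<dots> = qf (insert i I) c u'"
    proof (cases "d = 0")
      case True
      have "b = 0" using ci0[OF True] by (simp add: b_def)
      then show ?thesis using True
        by (simp add: qf_insert[OF insert.hyps insert.prems(1)] qI bI ui)
    next
      case False
      then show ?thesis
        by (simp add: qf_insert[OF insert.hyps insert.prems(1)] qI bI bI2 ui d_def[symmetric]
            field_simps power2_eq_square)
    qed
    finally show "qf I c' u \<ge> 0" using insert.prems(2)[of u'] by simp
  qed
  moreover have "\<And>s t. c' s t = c' t s" unfolding c'_def using insert.prems(1) by (simp add: mult_ac)
  ultimately obtain B where B: "\<forall>s\<in>I. \<forall>t\<in>I. c' s t = (\<Sum>j\<in>I. B s j * B t j)"
    using insert.IH by blast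
  define A where "A s j = (if j = i then a s else if s = i then 0 else B s j)" for s j
  have sumA: "(\<Sum>j\<in>insert i I. A s j * A t j) = a s * a t + (\<Sum>j\<in>I. A s j * A t j)" for s t
    using insert.hyps by (simp add: A_def)
  have ai: "a i = sqrt d"
    using d0 by (auto simp: a_def d_def[symmetric] real_div_sqrt)
  have cit: "c i t = a i * a t" if "t \<in> insert i I" for t
  proof (cases "d = 0")
    case True
    then show ?thesis using ci0 that ai d_def by (auto simp: a_def)
  next
    case False
    then show ?thesis using ai d0 by (simp add: a_def)
  qed
  show ?case
  proof (intro exI ballI)
    fix s t assume st: "s \<in> insert i I" "t \<in> insert i I"
    show "c s t = (\<Sum>j\<in>insert i I. A s j * A t j)"
    proof (cases "s = i \<or> t = i")
      case True
      have "(\<Sum>j\<in>I. A s j * A t j) = 0" using True insert.hyps by (intro sum.neutral) (auto simp: A_def)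
      then show ?thesis using True cit st insert.prems(1)[of s t] by (auto simp: sumA mult.commute)
    next
      case False
      then have "(\<Sum>j\<in>I. A s j * A t j) = (\<Sum>j\<in>I. B s j * B t j)"
        using insert.hyps by (intro sum.cong) (auto simp: A_def)
      moreover have "c s t - a s * a t = (\<Sum>j\<in>I. B s j * B t j)" using False st B by (auto simp: c'_def)
      ultimately show ?thesis by (simp add: sumA)
    qed
  qed
qed


lemma cis_sum: "cis (sum f A) = (\<Prod>x\<in>A. cis (f x))"
  by (induction A rule: infinite_finite_induct) (auto simp: cis_mult[symmetric])

lemma cis_borel[measurable]: "cis \<in> borel_measurable borel"
  unfolding cis_conv_exp by (intro borel_measurable_continuous_onI continuous_intros)

lemma gaussian_exists:
  assumes sym: "\<And>s t. c s t = c t s" and psd: "\<And>u. qf {1..T} c u \<ge> 0"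
  shows "\<exists>g. is_gaussian T m c g"
proof -
  let ?I = "{1..T}"
  obtain A where A: "\<forall>s\<in>?I. \<forall>t\<in>?I. c s t = (\<Sum>j\<in>?I. A s j * A t j)"
    using psd_decomp[of ?I c] sym psd by blast
  let ?N = "std_normal_distribution"
  define Z where "Z = PiM ?I (\<lambda>_. ?N)"
  define G where "G z = restrict (\<lambda>s. m s + (\<Sum>j\<in>?I. A s j * z j)) ?I" for z :: "nat \<Rightarrow> real"
  define g where "g = distr Z (Rsp T) G"
  interpret P: product_prob_space "\<lambda>_::nat. ?N"
    by (intro product_prob_spaceI) (simp add: prob_space_normal_density)
  interpret Zp: prob_space Z
    unfolding Z_def by (intro prob_space_PiM) (simp add: prob_space_normal_density)
  have Gm: "G \<in> measurable Z (Rsp T)"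
    unfolding G_def Z_def Rsp_def by measurable
  have "prob_space g" unfolding g_def by (intro Zp.prob_space_distr Gm)
  moreover have "sets g = sets (Rsp T)" unfolding g_def by simp
  moreover have "(CLINT \<xi>|g. cis (\<Sum>t\<in>?I. u t * \<xi> t)) =
        cis (\<Sum>t\<in>?I. u t * m t) *
        complex_of_real (exp (- (1/2) * (\<Sum>s\<in>?I. \<Sum>t\<in>?I. u s * c s t * u t)))" for u
  proof -
    define b where "b j = (\<Sum>t\<in>?I. u t * A t j)" for j
    have sumG: "(\<Sum>t\<in>?I. u t * G z t) = (\<Sum>t\<in>?I. u t * m t) + (\<Sum>j\<in>?I. b j * z j)" for z
    proof -
      have "(\<Sum>t\<in>?I. u t * G z t) = (\<Sum>t\<in>?I. u t * m t + (\<Sum>j\<in>?I. u t * A t j * z j))"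
        by (intro sum.cong) (auto simp: G_def sum_distrib_left algebra_simps)
      also have "\<dots> = (\<Sum>t\<in>?I. u t * m t) + (\<Sum>j\<in>?I. b j * z j)"
        by (simp add: sum.distrib b_def sum_distrib_right) (rule sum.swap)
      finally show ?thesis .
    qed
    have "(CLINT \<xi>|g. cis (\<Sum>t\<in>?I. u t * \<xi> t)) = (CLINT z|Z. cis (\<Sum>t\<in>?I. u t * G z t))"
      unfolding g_def by (rule integral_distr[OF Gm]) (unfold Rsp_def, measurable)
    also have "\<dots> = (CLINT z|Z. cis (\<Sum>t\<in>?I. u t * m t) * (\<Prod>j\<in>?I. cis (b j * z j)))"
      unfolding sumG by (simp add: cis_sum[symmetric] cis_mult)
    also have "\<dots> = cis (\<Sum>t\<in>?I. u t * m t) * (CLINT z|Z. (\<Prod>j\<in>?I. cis (b j * z j)))"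
      by simp
    also have "(CLINT z|Z. (\<Prod>j\<in>?I. cis (b j * z j))) = (\<Prod>j\<in>?I. CLINT x|?N. cis (b j * x))"
      unfolding Z_def
    proof (rule P.product_integral_prod)
      fix j
      show "integrable ?N (\<lambda>x. cis (b j * x))"
        by (rule P.M.integrable_const_bound[where B=1]) auto
    qed simp
    also have "\<dots> = (\<Prod>j\<in>?I. complex_of_real (exp (- ((b j)^2) / 2)))"
    proof (intro prod.cong refl)
      fix j
      have "(CLINT x|?N. cis (b j * x)) = char ?N (b j)"
        unfolding char_def by (simp add: cis_conv_exp)
      then show "(CLINT x|?N. cis (b j * x)) = complex_of_real (exp (- ((b j)^2) / 2))"
        by (simp add: char_std_normal_distribution)
    qed
    also have "\<dots> = complex_of_real (exp (- (1/2) * (\<Sum>j\<in>?I. (b j)^2)))"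
    proof -
      have "(\<Sum>j\<in>?I. - ((b j)^2) / 2) = - (1/2) * (\<Sum>j\<in>?I. (b j)^2)"
        by (simp add: sum_distrib_left sum_negf)
      then have "(\<Prod>j\<in>?I. exp (- ((b j)^2) / 2)) = exp (- (1/2) * (\<Sum>j\<in>?I. (b j)^2))"
        by (simp add: exp_sum[symmetric] del: of_nat_Suc)
      then show ?thesis by (metis of_real_prod)
    qed
    also have "(\<Sum>j\<in>?I. (b j)^2) = (\<Sum>s\<in>?I. \<Sum>t\<in>?I. u s * c s t * u t)"
    proof -
      have "(\<Sum>s\<in>?I. \<Sum>t\<in>?I. u s * c s t * u t) = (\<Sum>s\<in>?I. \<Sum>t\<in>?I. \<Sum>j\<in>?I. (u s * A s j) * (u t * A t j))"
        using A by (intro sum.cong refl) (simp add: sum_distrib_left sum_distrib_right mult_ac)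
      also have "\<dots> = (\<Sum>s\<in>?I. \<Sum>j\<in>?I. \<Sum>t\<in>?I. (u s * A s j) * (u t * A t j))"
        by (rule sum.cong[OF refl], rule sum.swap)
      also have "\<dots> = (\<Sum>j\<in>?I. \<Sum>s\<in>?I. \<Sum>t\<in>?I. (u s * A s j) * (u t * A t j))"
        by (rule sum.swap)
      also have "\<dots> = (\<Sum>j\<in>?I. (b j)^2)"
        by (simp add: b_def power2_eq_square sum_product)
      finally show ?thesis by simp
    qed
    finally show ?thesis by simp
  qed
  ultimately show ?thesis unfolding is_gaussian_def by blast
qed

lemma transfer_borel[measurable]: "transfer M \<in> borel_measurable borel"
proof -
  have "sigmoid \<in> borel_measurable borel"
    unfolding sigmoid_def[abs_def] by (intro borel_measurable_continuous_onI continuous_intros) (metis add_pos_pos exp_gt_zero zero_less_one less_irrefl)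
  moreover have "heaviside \<in> borel_measurable borel"
    unfolding heaviside_def[abs_def] by measurable
  ultimately show ?thesis unfolding transfer_def by auto
qed

lemma transfer_bound: "0 \<le> transfer M x \<and> transfer M x \<le> 1"
  by (auto simp: transfer_def sigmoid_def heaviside_def add_pos_pos)

lemma double_sum_sq: "(\<Sum>s\<in>I. \<Sum>t\<in>I. k * x s * x t) = k * ((\<Sum>s\<in>I. x s) * (\<Sum>s\<in>I. x s))" for k :: real
proof -
  have "sum x I * sum x I = (\<Sum>s\<in>I. \<Sum>t\<in>I. x s * x t)" by (rule sum_product)
  then show ?thesis by (simp add: sum_distrib_left mult.assoc)
qed

lemma g_mu_props:
  assumes mu: "prob_space \<mu>" "sets \<mu> = sets (Fsp T)"
  shows "prob_space (g_mu M T Jbar J \<mu>) \<and> sets (g_mu M T Jbar J \<mu>) = sets (Rsp T)"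
proof -
  interpret mu: prob_space \<mu> by fact
  let ?I = "{1..T}"
  let ?f = "\<lambda>s \<eta>. transfer M (\<eta> (s - 1))"
  have fm: "?f s \<in> borel_measurable \<mu>" if "s \<in> ?I" for s
  proof -
    have "(\<lambda>\<eta>::nat\<Rightarrow>real. \<eta> (s - 1)) \<in> measurable (Fsp T) lborel"
      unfolding Fsp_def by (rule measurable_component_singleton) (use that in auto)
    then have m1: "(\<lambda>\<eta>::nat\<Rightarrow>real. \<eta> (s - 1)) \<in> borel_measurable \<mu>"
      using measurable_cong_sets[OF mu(2) refl, of "borel :: real measure"] by simp
    show ?thesis by (rule measurable_compose[OF m1 transfer_borel])
  qed
  have fi: "integrable \<mu> (\<lambda>\<eta>. ?f s \<eta> * ?f t \<eta>)" if "s \<in> ?I" "t \<in> ?I" for s t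
    using fm[OF that(1)] fm[OF that(2)] transfer_bound
    by (intro mu.integrable_const_bound[where B=1]) (auto intro!: mult_le_one)
  have sym: "\<And>s t. c_mu M J \<mu> s t = c_mu M J \<mu> t s"
    unfolding c_mu_def by (simp add: mult.commute)
  have psd: "qf ?I (c_mu M J \<mu>) u \<ge> 0" for u
  proof -
    have "qf ?I (c_mu M J \<mu>) u = (\<Sum>s\<in>?I. \<Sum>t\<in>?I. \<integral>\<eta>. J\<^sup>2 * (u s * ?f s \<eta>) * (u t * ?f t \<eta>) \<partial>\<mu>)"
      unfolding qf_def c_mu_def by (intro sum.cong refl) (simp add: mult_ac)
    also have "\<dots> = (\<integral>\<eta>. (\<Sum>s\<in>?I. \<Sum>t\<in>?I. J\<^sup>2 * (u s * ?f s \<eta>) * (u t * ?f t \<eta>)) \<partial>\<mu>)"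
    proof -
      have ist: "integrable \<mu> (\<lambda>\<eta>. J\<^sup>2 * (u s * ?f s \<eta>) * (u t * ?f t \<eta>))" if "s \<in> ?I" "t \<in> ?I" for s t
      proof -
        have "integrable \<mu> (\<lambda>\<eta>. (J\<^sup>2 * u s * u t) * (?f s \<eta> * ?f t \<eta>))"
          using fi[OF that] by (rule integrable_mult_right)
        then show ?thesis by (simp add: mult_ac)
      qed
      have "(\<integral>\<eta>. (\<Sum>s\<in>?I. \<Sum>t\<in>?I. J\<^sup>2 * (u s * ?f s \<eta>) * (u t * ?f t \<eta>)) \<partial>\<mu>)
          = (\<Sum>s\<in>?I. \<integral>\<eta>. (\<Sum>t\<in>?I. J\<^sup>2 * (u s * ?f s \<eta>) * (u t * ?f t \<eta>)) \<partial>\<mu>)"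
        apply (rule Bochner_Integration.integral_sum)
        apply (rule Bochner_Integration.integrable_sum)
        apply (rule ist)
        by auto
      also have "\<dots> = (\<Sum>s\<in>?I. \<Sum>t\<in>?I. \<integral>\<eta>. J\<^sup>2 * (u s * ?f s \<eta>) * (u t * ?f t \<eta>) \<partial>\<mu>)"
        apply (rule sum.cong[OF refl], rule Bochner_Integration.integral_sum)
        apply (rule ist)
        by auto
      finally show ?thesis by simp
    qed
    also have "\<dots> = (\<integral>\<eta>. J\<^sup>2 * ((\<Sum>s\<in>?I. u s * ?f s \<eta>) * (\<Sum>s\<in>?I. u s * ?f s \<eta>)) \<partial>\<mu>)"
      by (rule Bochner_Integration.integral_cong[OF refl], rule double_sum_sq)
    also have "\<dots> \<ge> 0" by (intro integral_nonneg_AE AE_I2 mult_nonneg_nonneg zero_le_square) simp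
    finally show ?thesis .
  qed
  obtain g where "is_gaussian T (m_mu M Jbar \<mu>) (c_mu M J \<mu>) g"
    using gaussian_exists[OF sym psd] by blast
  then have "is_gaussian T (m_mu M Jbar \<mu>) (c_mu M J \<mu>) (g_mu M T Jbar J \<mu>)"
    unfolding g_mu_def gaussian_law_def by (rule someI)
  then show ?thesis unfolding is_gaussian_def by blast
qed

lemma nd_shift:
  assumes "\<sigma> > 0"
  shows "normal_density a \<sigma> y = normal_density 0 \<sigma> y * exp ((- (a\<^sup>2) / 2 + y * a) / \<sigma>\<^sup>2)"
proof -
  have "-(y - a)\<^sup>2/ (2 * \<sigma>\<^sup>2) = -(y - 0)\<^sup>2/ (2 * \<sigma>\<^sup>2) + (- (a\<^sup>2) / 2 + y * a) / \<sigma>\<^sup>2"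
    using assms by (simp add: field_simps power2_eq_square)
  then have e: "exp (-(y - a)\<^sup>2/ (2 * \<sigma>\<^sup>2)) = exp (-(y - 0)\<^sup>2/ (2 * \<sigma>\<^sup>2)) * exp ((- (a\<^sup>2) / 2 + y * a) / \<sigma>\<^sup>2)"
    by (simp only: exp_add)
  show ?thesis unfolding normal_density_def e by (simp only: mult.assoc)
qed

lemma shift_1d:
  assumes "\<sigma> > 0"
  shows "density (density lborel (normal_density 0 \<sigma>)) (\<lambda>x. ennreal (exp ((- (a\<^sup>2) / 2 + x * a) / \<sigma>\<^sup>2)))
       = distr (density lborel (normal_density 0 \<sigma>)) borel (\<lambda>x. x + a)"
proof (rule measure_eqI)
  fix A assume "A \<in> sets (density (density lborel (normal_density 0 \<sigma>)) (\<lambda>x. ennreal (exp ((- (a\<^sup>2) / 2 + x * a) / \<sigma>\<^sup>2))))"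
  then have A[measurable]: "A \<in> sets borel" by simp
  let ?r = "\<lambda>x. exp ((- (a\<^sup>2) / 2 + x * a) / \<sigma>\<^sup>2)"
  have "emeasure (density (density lborel (normal_density 0 \<sigma>)) (\<lambda>x. ennreal (?r x))) A
      = (\<integral>\<^sup>+x. ennreal (normal_density 0 \<sigma> x) * (ennreal (?r x) * indicator A x) \<partial>lborel)"
    by (simp add: emeasure_density nn_integral_density)
  also have "\<dots> = (\<integral>\<^sup>+x. ennreal (normal_density a \<sigma> x) * indicator A x \<partial>lborel)"
  proof (intro nn_integral_cong)
    fix x
    have "normal_density a \<sigma> x = normal_density 0 \<sigma> x * ?r x" by (rule nd_shift[OF assms])
    then show "ennreal (normal_density 0 \<sigma> x) * (ennreal (?r x) * indicator A x) =
        ennreal (normal_density a \<sigma> x) * indicator A x"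
      using ennreal_mult[OF normal_density_nonneg exp_ge_zero, of 0 \<sigma> x "(- (a\<^sup>2) / 2 + x * a) / \<sigma>\<^sup>2"]
      by (simp add: mult.assoc)
  qed
  also have "\<dots> = (\<integral>\<^sup>+x. ennreal (normal_density a \<sigma> (a + x)) * indicator A (a + x) \<partial>lborel)"
  proof -
    have m: "(\<lambda>x. ennreal (normal_density a \<sigma> x) * indicator A x) \<in> borel_measurable borel"
      by measurable
    show ?thesis using nn_integral_real_affine[OF m, of 1 a] by simp
  qed
  also have "\<dots> = (\<integral>\<^sup>+x. ennreal (normal_density 0 \<sigma> x) * indicator A (x + a) \<partial>lborel)"
    by (intro nn_integral_cong) (simp add: normal_density_def add.commute)
  also have "\<dots> = emeasure (distr (density lborel (normal_density 0 \<sigma>)) borel (\<lambda>x. x + a)) A"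
  proof -
    have "emeasure (distr (density lborel (normal_density 0 \<sigma>)) borel (\<lambda>x. x + a)) A
       = emeasure (density lborel (normal_density 0 \<sigma>)) ((\<lambda>x. x + a) -` A)"
      by (subst emeasure_distr) auto
    also have "\<dots> = (\<integral>\<^sup>+x. ennreal (normal_density 0 \<sigma> x) * indicator ((\<lambda>x. x + a) -` A) x \<partial>lborel)"
    proof -
      have "(\<lambda>x::real. x + a) -` A \<in> sets borel"
        using measurable_sets[of "\<lambda>x::real. x + a" borel borel A] by simp
      then show ?thesis by (subst emeasure_density) (auto simp: nn_integral_set_ennreal)
    qed
    finally show ?thesis by (simp add: indicator_def)
  qed
  finally show "emeasure (density (density lborel (normal_density 0 \<sigma>)) (\<lambda>x. ennreal (?r x))) A =
      emeasure (distr (density lborel (normal_density 0 \<sigma>)) borel (\<lambda>x. x + a)) A" .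
qed simp


lemma indicator_PiE_prod:
  assumes "finite I" "w \<in> extensional I"
  shows "(indicator (Pi\<^sub>E I A) w :: ennreal) = (\<Prod>i\<in>I. indicator (A i) (w i))"
proof (cases "\<forall>i\<in>I. w i \<in> A i")
  case True
  then show ?thesis using assms by (auto simp: indicator_def PiE_def Pi_def intro!: prod.neutral[symmetric])
next
  case False
  then obtain i where "i \<in> I" "w i \<notin> A i" by blast
  then show ?thesis using assms by (subst prod_zero) (auto simp: indicator_def PiE_def Pi_def)
qed

lemma shift_PiM:
  fixes v :: "nat \<Rightarrow> real"
  assumes sig: "\<sigma> > 0" and fin: "finite I"
  shows "distr (PiM I (\<lambda>_. density lborel (normal_density 0 \<sigma>))) (PiM I (\<lambda>_. lborel)) (\<lambda>w. restrict (\<lambda>t. v t + w t) I)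
       = density (PiM I (\<lambda>_. density lborel (normal_density 0 \<sigma>)))
           (\<lambda>w. \<Prod>i\<in>I. ennreal (exp ((- ((v i)\<^sup>2) / 2 + w i * v i) / \<sigma>\<^sup>2)))"
proof -
  let ?N = "density lborel (normal_density 0 \<sigma>)"
  let ?W = "PiM I (\<lambda>_. ?N)"
  define r where "r i x = exp ((- ((v i)\<^sup>2) / 2 + x * v i) / \<sigma>\<^sup>2)" for i x
  define K where "K i = density ?N (\<lambda>x. ennreal (r i x))" for i
  have K: "K i = distr ?N borel (\<lambda>x. x + v i)" for i
    unfolding K_def r_def by (rule shift_1d) (rule sig)
  have Np: "prob_space ?N" using sig by (rule prob_space_normal_density)
  interpret Kp: product_prob_space K
    by (intro product_prob_spaceI) (simp add: K prob_space.prob_space_distr[OF Np])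
  interpret Np: product_prob_space "\<lambda>_::nat. ?N"
    by (intro product_prob_spaceI Np)
  have rm[measurable]: "(\<lambda>x. r i x) \<in> borel_measurable borel" for i unfolding r_def by measurable
  have Sm: "(\<lambda>w. restrict (\<lambda>t. v t + w t) I) \<in> measurable ?W (PiM I (\<lambda>_. lborel))"
    by measurable
  have L: "distr ?W (PiM I (\<lambda>_. lborel)) (\<lambda>w. restrict (\<lambda>t. v t + w t) I) = PiM I K"
  proof (rule Kp.PiM_eqI[OF fin])
    show "sets (distr ?W (PiM I (\<lambda>_. lborel)) (\<lambda>w. restrict (\<lambda>t. v t + w t) I)) = sets (PiM I K)"
      by (simp add: K_def cong: sets_PiM_cong)
  next
    fix A assume A: "\<And>i. i \<in> I \<Longrightarrow> A i \<in> sets (K i)"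
    then have Ab: "A i \<in> sets borel" if "i \<in> I" for i using that by (simp add: K_def)
    have pre: "(\<lambda>w. restrict (\<lambda>t. v t + w t) I) -` Pi\<^sub>E I A \<inter> space ?W = Pi\<^sub>E I (\<lambda>i. (\<lambda>x. x + v i) -` A i)"
      by (auto simp: space_PiM PiE_def Pi_def add.commute)
    have "emeasure (distr ?W (PiM I (\<lambda>_. lborel)) (\<lambda>w. restrict (\<lambda>t. v t + w t) I)) (Pi\<^sub>E I A)
        = emeasure ?W (Pi\<^sub>E I (\<lambda>i. (\<lambda>x. x + v i) -` A i))"
      using Ab by (subst emeasure_distr[OF Sm]) (auto simp: pre intro!: sets_PiM_I_finite fin)
    also have "\<dots> = (\<Prod>i\<in>I. emeasure ?N ((\<lambda>x. x + v i) -` A i))"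
    proof (rule Np.emeasure_PiM[OF fin])
      fix i assume "i \<in> I"
      then show "(\<lambda>x. x + v i) -` A i \<in> sets ?N"
        using measurable_sets[of "\<lambda>x::real. x + v i" borel borel "A i"] Ab by simp
    qed
    also have "\<dots> = (\<Prod>i\<in>I. emeasure (K i) (A i))"
    proof (intro prod.cong refl)
      fix i assume "i \<in> I"
      then show "emeasure ?N ((\<lambda>x. x + v i) -` A i) = emeasure (K i) (A i)"
        using Ab by (simp add: K emeasure_distr)
    qed
    finally show "emeasure (distr ?W (PiM I (\<lambda>_. lborel)) (\<lambda>w. restrict (\<lambda>t. v t + w t) I)) (Pi\<^sub>E I A)
        = (\<Prod>i\<in>I. emeasure (K i) (A i))" .
  qed
  have R: "density ?W (\<lambda>w. \<Prod>i\<in>I. ennreal (r i (w i))) = PiM I K"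
  proof (rule Kp.PiM_eqI[OF fin])
    show "sets (density ?W (\<lambda>w. \<Prod>i\<in>I. ennreal (r i (w i)))) = sets (PiM I K)"
      by (simp add: K_def cong: sets_PiM_cong)
  next
    fix A assume A: "\<And>i. i \<in> I \<Longrightarrow> A i \<in> sets (K i)"
    then have Ab: "A i \<in> sets borel" if "i \<in> I" for i using that by (simp add: K_def)
    have PA: "Pi\<^sub>E I A \<in> sets ?W" using Ab by (auto intro!: sets_PiM_I_finite fin)
    have "emeasure (density ?W (\<lambda>w. \<Prod>i\<in>I. ennreal (r i (w i)))) (Pi\<^sub>E I A)
        = (\<integral>\<^sup>+w. (\<Prod>i\<in>I. ennreal (r i (w i))) * indicator (Pi\<^sub>E I A) w \<partial>?W)"
      using PA by (subst emeasure_density) (auto simp: nn_integral_set_ennreal)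
    also have "\<dots> = (\<integral>\<^sup>+w. (\<Prod>i\<in>I. ennreal (r i (w i)) * indicator (A i) (w i)) \<partial>?W)"
    proof (intro nn_integral_cong)
      fix w assume "w \<in> space ?W"
      then have "w \<in> extensional I" by (simp add: space_PiM PiE_def)
      then show "(\<Prod>i\<in>I. ennreal (r i (w i))) * indicator (Pi\<^sub>E I A) w = (\<Prod>i\<in>I. ennreal (r i (w i)) * indicator (A i) (w i))"
        by (simp add: indicator_PiE_prod[OF fin] prod.distrib)
    qed
    also have "\<dots> = (\<Prod>i\<in>I. \<integral>\<^sup>+x. ennreal (r i x) * indicator (A i) x \<partial>?N)"
      using Ab by (intro Np.product_nn_integral_prod[OF fin]) auto
    also have "\<dots> = (\<Prod>i\<in>I. emeasure (K i) (A i))"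
      using Ab by (intro prod.cong refl) (simp add: K_def emeasure_density nn_integral_set_ennreal)
    finally show "emeasure (density ?W (\<lambda>w. \<Prod>i\<in>I. ennreal (r i (w i)))) (Pi\<^sub>E I A) = (\<Prod>i\<in>I. emeasure (K i) (A i))" .
  qed
  show ?thesis using L R by (simp add: r_def)
qed

lemma comp_meas[measurable]: "(\<lambda>x::nat\<Rightarrow>real. x k) \<in> borel_measurable (PiM I (\<lambda>_. lborel))"
proof (cases "k \<in> I")
  case True
  then show ?thesis using measurable_component_singleton[of k I "\<lambda>_. lborel"] by simp
next
  case False
  have "(\<lambda>x::nat\<Rightarrow>real. x k) \<in> borel_measurable (PiM I (\<lambda>_. lborel)) \<longleftrightarrow> (\<lambda>x::nat\<Rightarrow>real. undefined :: real) \<in> borel_measurable (PiM I (\<lambda>_. lborel))"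
    using False by (intro Sigma_Algebra.measurable_cong) (auto simp: space_PiM PiE_def extensional_def)
  then show ?thesis by simp
qed

lemma phi_IF_meas[measurable]: "phi_IF g vth th \<in> borel_measurable borel"
  unfolding phi_IF_def[abs_def] by measurable

lemma leak_meas[measurable]: "leak M g vth th \<in> borel_measurable borel"
  unfolding leak_def[abs_def] by (cases "M = IF") simp_all

lemma traj_meas[measurable]:
  assumes [measurable]: "lk \<in> borel_measurable borel"
  shows "(\<lambda>p. traj lk th (fst p) (snd p) t) \<in> borel_measurable (borel \<Otimes>\<^sub>M PiM I (\<lambda>_. lborel))"
  by (induction t) simp_all

lemma traj_local:
  "(\<And>s. s \<in> {1..t} \<Longrightarrow> w s = w' s) \<Longrightarrow> traj lk th x0 w t = traj lk th x0 w' t"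
  by (induction t) auto

lemma Psi_meas[measurable]:
  assumes [measurable]: "lk \<in> borel_measurable borel"
  shows "(\<lambda>p. restrict (traj lk th (fst p) (snd p)) {0..T}) \<in> measurable (borel \<Otimes>\<^sub>M PiM I (\<lambda>_. lborel)) (Fsp T)"
  unfolding Fsp_def by (rule measurable_restrict) simp

lemma Phi_Psi:
  assumes "k \<in> {1..T}"
  shows "Phi M g vth th (restrict (traj (leak M g vth th) th x0 w) {0..T}) k = w k"
proof -
  obtain j where k: "k = Suc j" using assms by (cases k) auto
  show ?thesis using assms unfolding Phi_def k by simp
qed

lemma Phi_meas[measurable]: "(\<lambda>\<eta>. Phi M g vth th \<eta> k) \<in> borel_measurable (PiM I (\<lambda>_. lborel))"
  unfolding Phi_def by measurable

lemma meas_transfer: "f \<in> measurable M N \<Longrightarrow> sets M' = sets M \<Longrightarrow> f \<in> measurable M' N"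
  using measurable_cong_sets[of M' M N N] by simp

lemma rho_eq:
  fixes v w :: "nat \<Rightarrow> real"
  shows "(\<Prod>i\<in>{1..T}. ennreal (exp ((- ((v i)\<^sup>2) / 2 + w i * v i) / \<sigma>\<^sup>2))) =
    ennreal (exp ((1 / \<sigma>\<^sup>2) * (\<Sum>k\<in>{1..T}. - (1/2) * (v k)\<^sup>2 +
        Phi M g vth th (restrict (traj (leak M g vth th) th x0 w) {0..T}) k * v k)))"
proof -
  have "(\<Sum>k\<in>{1..T}. (- ((v k)\<^sup>2) / 2 + w k * v k) / \<sigma>\<^sup>2) = (1 / \<sigma>\<^sup>2) * (\<Sum>k\<in>{1..T}. - (1/2) * (v k)\<^sup>2 +
        Phi M g vth th (restrict (traj (leak M g vth th) th x0 w) {0..T}) k * v k)"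
    unfolding sum_distrib_left by (intro sum.cong refl) (simp add: Phi_Psi field_simps)
  then show ?thesis
    by (simp add: prod_ennreal exp_sum[symmetric])
qed

lemma D0_meas:
  "(\<lambda>p. ennreal (exp ((1 / \<sigma>\<^sup>2) * (\<Sum>k\<in>{1..T}. - (1/2) * (snd p k)\<^sup>2 + Phi M g vth th (fst p) k * snd p k))))
    \<in> borel_measurable (Fsp T \<Otimes>\<^sub>M Rsp T)"
  unfolding Fsp_def Rsp_def by measurable

lemma D0_meas_real:
  "(\<lambda>\<xi>. exp ((1 / \<sigma>\<^sup>2) * (\<Sum>k\<in>{1..T}. - (1/2) * (\<xi> k)\<^sup>2 + Phi M g vth th \<eta> k * \<xi> k)))
    \<in> borel_measurable (Rsp T)"
  unfolding Rsp_def by measurable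

lemma D_meas:
  assumes "sets g = sets (Rsp T)" "finite_measure g"
  shows "(\<lambda>\<eta>. \<integral>\<xi>. exp ((1 / \<sigma>\<^sup>2) * (\<Sum>k\<in>{1..T}. - (1/2) * (\<xi> k)\<^sup>2 + Phi M g' vth th \<eta> k * \<xi> k)) \<partial>g)
    \<in> borel_measurable (Fsp T)"
proof -
  interpret finite_measure g by fact
  have "(\<lambda>(\<eta>, \<xi>). exp ((1 / \<sigma>\<^sup>2) * (\<Sum>k\<in>{1..T}. - (1/2) * (\<xi> k)\<^sup>2 + Phi M g' vth th \<eta> k * \<xi> k)))
    \<in> borel_measurable (Fsp T \<Otimes>\<^sub>M g)"
  proof (rule meas_transfer)
    show "(\<lambda>(\<eta>, \<xi>). exp ((1 / \<sigma>\<^sup>2) * (\<Sum>k\<in>{1..T}. - (1/2) * (\<xi> k)\<^sup>2 + Phi M g' vth th \<eta> k * \<xi> k)))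
      \<in> borel_measurable (Fsp T \<Otimes>\<^sub>M Rsp T)"
      unfolding Fsp_def Rsp_def by measurable
    show "sets (Fsp T \<Otimes>\<^sub>M g) = sets (Fsp T \<Otimes>\<^sub>M Rsp T)"
      by (rule sets_pair_measure_cong[OF refl assms(1)])
  qed
  then show ?thesis by (rule borel_measurable_lebesgue_integral)
qed

lemma D0_bound:
  fixes \<xi> a :: "nat \<Rightarrow> real"
  assumes "\<sigma> > 0"
  shows "exp ((1 / \<sigma>\<^sup>2) * (\<Sum>k\<in>{1..T}. - (1/2) * (\<xi> k)\<^sup>2 + a k * \<xi> k))
      \<le> exp ((1 / \<sigma>\<^sup>2) * (\<Sum>k\<in>{1..T}. (a k)\<^sup>2 / 2))"
proof -
  have "(\<Sum>k\<in>{1..T}. - (1/2) * (\<xi> k)\<^sup>2 + a k * \<xi> k) \<le> (\<Sum>k\<in>{1..T}. (a k)\<^sup>2 / 2)"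
  proof (intro sum_mono)
    fix k
    have "0 \<le> (\<xi> k - a k)\<^sup>2" by simp
    then show "- (1/2) * (\<xi> k)\<^sup>2 + a k * \<xi> k \<le> (a k)\<^sup>2 / 2" by (simp add: power2_eq_square algebra_simps)
  qed
  then show ?thesis using assms by (simp add: divide_right_mono)
qed

theorem mainTheorem5:
  fixes T :: nat and M :: model
    and \<theta> \<sigma> Jbar J \<gamma> vth :: real
    and m0 :: "real measure" and \<mu> :: "(nat \<Rightarrow> real) measure"
  assumes "T \<ge> 1" and "\<sigma> > 0" and "J > 0"
    and "M = IF \<longrightarrow> (0 < \<gamma> \<and> \<gamma> < 1 \<and> vth < 0 \<and> 0 < \<theta>)"
    and "prob_space m0" and "sets m0 = sets borel"
    and "prob_space \<mu>" and "sets \<mu> = sets (Fsp T)"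
    and "distr \<mu> borel (\<lambda>\<eta>. \<eta> 0) = m0"
  shows "absolutely_continuous (free_law M \<gamma> vth \<theta> \<sigma> m0 T) (mf_prop M \<gamma> vth \<theta> \<sigma> Jbar J T \<mu>)
    \<and> (AE \<eta> in free_law M \<gamma> vth \<theta> \<sigma> m0 T.
         RN_deriv (free_law M \<gamma> vth \<theta> \<sigma> m0 T) (mf_prop M \<gamma> vth \<theta> \<sigma> Jbar J T \<mu>) \<eta> =
         ennreal (\<integral>\<xi>. exp ((1 / \<sigma>\<^sup>2) * (\<Sum>k\<in>{1..T}.
                     - (1/2) * (\<xi> k)\<^sup>2 + Phi M \<gamma> vth \<theta> \<eta> k * \<xi> k))
                  \<partial>(g_mu M T Jbar J \<mu>)))"
proof -
  note sig = assms(2)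
  interpret m0: prob_space m0 by fact
  interpret mu: prob_space \<mu> by fact
  define lk where "lk = leak M \<gamma> vth \<theta>"
  define W where "W = Wnoise T \<sigma>"
  define g where "g = g_mu M T Jbar J \<mu>"
  define P where "P = free_law M \<gamma> vth \<theta> \<sigma> m0 T"
  define D0 where "D0 = (\<lambda>(\<xi>::nat\<Rightarrow>real) \<eta>. exp ((1 / \<sigma>\<^sup>2) * (\<Sum>k\<in>{1..T}. - (1/2) * (\<xi> k)\<^sup>2 + Phi M \<gamma> vth \<theta> \<eta> k * \<xi> k)))"
  define D where "D = (\<lambda>\<eta>. \<integral>\<xi>. D0 \<xi> \<eta> \<partial>g)"
  define Psi where "Psi = (\<lambda>p::real \<times> (nat \<Rightarrow> real). restrict (traj lk \<theta> (fst p) (snd p)) {0..T})"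
  define S where "S = (\<lambda>v w::nat\<Rightarrow>real. restrict (\<lambda>t. v t + w t) {1..T})"
  define G where "G = (\<lambda>q::(real \<times> (nat \<Rightarrow> real)) \<times> (nat \<Rightarrow> real). Psi (fst (fst q), S (snd q) (snd (fst q))))"
  define \<rho> where "\<rho> = (\<lambda>v w::nat\<Rightarrow>real. \<Prod>i\<in>{1..T}. ennreal (exp ((- ((v i)\<^sup>2) / 2 + w i * v i) / \<sigma>\<^sup>2)))"

  have gp: "prob_space g" "sets g = sets (Rsp T)" using g_mu_props[OF assms(7,8)] g_def by auto
  interpret g: prob_space g by (rule gp)
  have sW: "sets W = sets (Rsp T)" unfolding W_def Wnoise_def Rsp_def by (intro sets_PiM_cong) auto
  have Wp: "prob_space W" unfolding W_def Wnoise_def using sig by (intro prob_space_PiM prob_space_normal_density)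
  interpret W: prob_space W by (rule Wp)
  interpret m0W: pair_prob_space m0 W
    by (simp add: pair_prob_space_def pair_sigma_finite_def prob_space_imp_sigma_finite
        m0.prob_space_axioms W.prob_space_axioms)
  have sP0: "sets (m0 \<Otimes>\<^sub>M W) = sets (borel \<Otimes>\<^sub>M Rsp T)" by (rule sets_pair_measure_cong[OF assms(6) sW])
  have sQ: "sets ((m0 \<Otimes>\<^sub>M W) \<Otimes>\<^sub>M g) = sets ((borel \<Otimes>\<^sub>M Rsp T) \<Otimes>\<^sub>M Rsp T)"
    by (rule sets_pair_measure_cong[OF sP0 gp(2)])
  have lkm[measurable]: "lk \<in> borel_measurable borel" unfolding lk_def by measurable
  have Psim_c: "Psi \<in> measurable (borel \<Otimes>\<^sub>M Rsp T) (Fsp T)"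
    unfolding Psi_def Rsp_def by (rule Psi_meas[OF lkm])
  have Psim: "Psi \<in> measurable (m0 \<Otimes>\<^sub>M W) (Fsp T)" by (rule meas_transfer[OF Psim_c sP0])
  have Gm_c: "G \<in> measurable ((borel \<Otimes>\<^sub>M Rsp T) \<Otimes>\<^sub>M Rsp T) (Fsp T)"
    unfolding G_def S_def by (rule measurable_compose[OF _ Psim_c]) (unfold Rsp_def, measurable)
  have Gm: "G \<in> measurable ((m0 \<Otimes>\<^sub>M W) \<Otimes>\<^sub>M g) (Fsp T)" by (rule meas_transfer[OF Gm_c sQ])
  have Peq: "P = distr (m0 \<Otimes>\<^sub>M W) (Fsp T) Psi"
    unfolding P_def free_law_def Psi_def W_def lk_def by (simp add: split_beta')
  interpret Pp: prob_space P unfolding Peq by (intro m0W.prob_space_distr Psim)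
  have sP: "sets P = sets (Fsp T)" unfolding Peq by simp

  have mfeq: "mf_prop M \<gamma> vth \<theta> \<sigma> Jbar J T \<mu> = distr ((m0 \<Otimes>\<^sub>M W) \<Otimes>\<^sub>M g) (Fsp T) G"
  proof -
    define h1 where "h1 = (\<lambda>p::(nat\<Rightarrow>real) \<times> (nat\<Rightarrow>real). (fst p 0, snd p))"
    define h where "h = (\<lambda>q::((nat\<Rightarrow>real) \<times> (nat\<Rightarrow>real)) \<times> (nat\<Rightarrow>real). (h1 (fst q), snd q))"
    have u0m: "(\<lambda>u::nat\<Rightarrow>real. u 0) \<in> measurable \<mu> borel"
      by (rule meas_transfer[OF _ assms(8)]) (unfold Fsp_def, measurable)
    have h1m: "h1 \<in> measurable (\<mu> \<Otimes>\<^sub>M W) (borel \<Otimes>\<^sub>M W)"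
      unfolding h1_def using u0m by measurable
    have hm: "h \<in> measurable ((\<mu> \<Otimes>\<^sub>M W) \<Otimes>\<^sub>M g) ((borel \<Otimes>\<^sub>M W) \<Otimes>\<^sub>M g)"
      unfolding h_def using h1m by measurable
    have e1: "distr (\<mu> \<Otimes>\<^sub>M W) (borel \<Otimes>\<^sub>M W) h1 = m0 \<Otimes>\<^sub>M W"
    proof -
      have "distr \<mu> borel (\<lambda>u. u 0) \<Otimes>\<^sub>M distr W W (\<lambda>w. w) = distr (\<mu> \<Otimes>\<^sub>M W) (borel \<Otimes>\<^sub>M W) (\<lambda>(x, y). (x 0, y))"
        by (rule pair_measure_distr[OF u0m]) (simp_all add: prob_space_imp_sigma_finite W.prob_space_axioms)
      then show ?thesis using assms(9) by (simp add: h1_def split_beta')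
    qed
    have e2: "distr ((\<mu> \<Otimes>\<^sub>M W) \<Otimes>\<^sub>M g) ((borel \<Otimes>\<^sub>M W) \<Otimes>\<^sub>M g) h = (m0 \<Otimes>\<^sub>M W) \<Otimes>\<^sub>M g"
    proof -
      have "distr (\<mu> \<Otimes>\<^sub>M W) (borel \<Otimes>\<^sub>M W) h1 \<Otimes>\<^sub>M distr g g (\<lambda>w. w) = distr ((\<mu> \<Otimes>\<^sub>M W) \<Otimes>\<^sub>M g) ((borel \<Otimes>\<^sub>M W) \<Otimes>\<^sub>M g) (\<lambda>(x, y). (h1 x, y))"
        by (rule pair_measure_distr[OF h1m]) (simp_all add: prob_space_imp_sigma_finite g.prob_space_axioms)
      then show ?thesis using e1 by (simp add: h_def split_beta')
    qed
    have sB: "sets ((borel \<Otimes>\<^sub>M W) \<Otimes>\<^sub>M g) = sets ((borel \<Otimes>\<^sub>M Rsp T) \<Otimes>\<^sub>M Rsp T)"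
      by (intro sets_pair_measure_cong sW gp(2) refl)
    have Gm2: "G \<in> measurable ((borel \<Otimes>\<^sub>M W) \<Otimes>\<^sub>M g) (Fsp T)" by (rule meas_transfer[OF Gm_c sB])
    have feq: "(\<lambda>((u, w), v). restrict (traj (leak M \<gamma> vth \<theta>) \<theta> (u 0) (\<lambda>t. v t + w t)) {0..T}) = G \<circ> h"
    proof (rule ext)
      fix q :: "((nat\<Rightarrow>real) \<times> (nat\<Rightarrow>real)) \<times> (nat\<Rightarrow>real)"
      obtain u w v where q: "q = ((u, w), v)" by (metis prod.collapse)
      have "restrict (traj lk \<theta> (u 0) (\<lambda>t. v t + w t)) {0..T} = restrict (traj lk \<theta> (u 0) (S v w)) {0..T}"
      proof (intro restrict_ext)
        fix t assume "t \<in> {0..T}"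
        then show "traj lk \<theta> (u 0) (\<lambda>t. v t + w t) t = traj lk \<theta> (u 0) (S v w) t"
          by (intro traj_local) (auto simp: S_def)
      qed
      then show "(\<lambda>((u, w), v). restrict (traj (leak M \<gamma> vth \<theta>) \<theta> (u 0) (\<lambda>t. v t + w t)) {0..T}) q = (G \<circ> h) q"
        by (simp add: q G_def h_def h1_def Psi_def lk_def)
    qed
    have "mf_prop M \<gamma> vth \<theta> \<sigma> Jbar J T \<mu> = distr ((\<mu> \<Otimes>\<^sub>M W) \<Otimes>\<^sub>M g) (Fsp T) (G \<circ> h)"
      unfolding mf_prop_def feq[symmetric] W_def g_def ..
    also have "\<dots> = distr (distr ((\<mu> \<Otimes>\<^sub>M W) \<Otimes>\<^sub>M g) ((borel \<Otimes>\<^sub>M W) \<Otimes>\<^sub>M g) h) (Fsp T) G"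
      by (rule distr_distr[OF Gm2 hm, symmetric])
    also have "\<dots> = distr ((m0 \<Otimes>\<^sub>M W) \<Otimes>\<^sub>M g) (Fsp T) G" by (simp only: e2)
    finally show ?thesis .
  qed

  have Dmc: "D \<in> borel_measurable (Fsp T)"
    unfolding D_def D0_def by (rule D_meas[OF gp(2)]) (simp add: g.finite_measure_axioms)
  have DmP[measurable]: "D \<in> borel_measurable P" by (rule meas_transfer[OF Dmc sP])
  have Dm: "(\<lambda>\<eta>. ennreal (D \<eta>)) \<in> borel_measurable P" by measurable
  have main: "distr ((m0 \<Otimes>\<^sub>M W) \<Otimes>\<^sub>M g) (Fsp T) G = density P (\<lambda>\<eta>. ennreal (D \<eta>))"
  proof (rule measure_eqI)
    show "sets (distr ((m0 \<Otimes>\<^sub>M W) \<Otimes>\<^sub>M g) (Fsp T) G) = sets (density P (\<lambda>\<eta>. ennreal (D \<eta>)))"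
      using sP by simp
  next
    fix A assume "A \<in> sets (distr ((m0 \<Otimes>\<^sub>M W) \<Otimes>\<^sub>M g) (Fsp T) G)"
    then have A: "A \<in> sets (Fsp T)" by simp
    let ?Q = "(m0 \<Otimes>\<^sub>M W) \<Otimes>\<^sub>M g"
    interpret Qp: pair_sigma_finite "m0 \<Otimes>\<^sub>M W" g
      by (simp add: pair_sigma_finite_def prob_space_imp_sigma_finite m0W.P.prob_space_axioms g.prob_space_axioms)
    interpret Pg: pair_sigma_finite P g
      by (simp add: pair_sigma_finite_def prob_space_imp_sigma_finite Pp.prob_space_axioms g.prob_space_axioms)
    have inner: "(\<integral>\<^sup>+p. indicator A (G (p, v)) \<partial>(m0 \<Otimes>\<^sub>M W)) = (\<integral>\<^sup>+\<eta>. ennreal (D0 v \<eta>) * indicator A \<eta> \<partial>P)" for v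
    proof -
      have Sm_c: "S v \<in> measurable (Rsp T) (Rsp T)" unfolding S_def Rsp_def by measurable
      have Sm: "S v \<in> measurable W (Rsp T)" by (rule meas_transfer[OF Sm_c sW])
      have rm_c: "\<rho> v \<in> borel_measurable (Rsp T)" unfolding \<rho>_def Rsp_def by measurable
      have rm: "\<rho> v \<in> borel_measurable W" by (rule meas_transfer[OF rm_c sW])
      have Fm: "(\<lambda>z. indicator A (Psi (x0, z)) :: ennreal) \<in> borel_measurable (Rsp T)" for x0
      proof -
        have "(\<lambda>z. (x0, z)) \<in> measurable (Rsp T) (borel \<Otimes>\<^sub>M Rsp T)" by measurable
        then show ?thesis by (rule measurable_compose[OF _ measurable_compose[OF Psim_c borel_measurable_indicator[OF A]]])
      qed
      have f1m: "(\<lambda>p. indicator A (G (p, v)) :: ennreal) \<in> borel_measurable (m0 \<Otimes>\<^sub>M W)"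
      proof (rule meas_transfer[OF _ sP0])
        have "(\<lambda>p::real \<times> (nat \<Rightarrow> real). (fst p, S v (snd p))) \<in> measurable (borel \<Otimes>\<^sub>M Rsp T) (borel \<Otimes>\<^sub>M Rsp T)"
          using Sm_c by measurable
        then show "(\<lambda>p. indicator A (G (p, v)) :: ennreal) \<in> borel_measurable (borel \<Otimes>\<^sub>M Rsp T)"
          unfolding G_def by (simp add: measurable_compose[OF _ measurable_compose[OF Psim_c borel_measurable_indicator[OF A]]])
      qed
      have f2m: "(\<lambda>p. \<rho> v (snd p) * indicator A (Psi p)) \<in> borel_measurable (m0 \<Otimes>\<^sub>M W)"
      proof (rule meas_transfer[OF _ sP0])
        show "(\<lambda>p. \<rho> v (snd p) * indicator A (Psi p)) \<in> borel_measurable (borel \<Otimes>\<^sub>M Rsp T)"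
          by (intro borel_measurable_times_ennreal measurable_compose[OF measurable_snd rm_c]
              measurable_compose[OF Psim_c borel_measurable_indicator[OF A]])
      qed
      have "(\<integral>\<^sup>+p. indicator A (G (p, v)) \<partial>(m0 \<Otimes>\<^sub>M W))
          = (\<integral>\<^sup>+x0. \<integral>\<^sup>+w. indicator A (Psi (x0, S v w)) \<partial>W \<partial>m0)"
        using W.nn_integral_fst[OF f1m] by (simp add: G_def)
      also have "\<dots> = (\<integral>\<^sup>+x0. \<integral>\<^sup>+w. \<rho> v w * indicator A (Psi (x0, w)) \<partial>W \<partial>m0)"
      proof (rule nn_integral_cong)
        fix x0 :: real
        have sh: "distr W (Rsp T) (S v) = density W (\<rho> v)"
          unfolding W_def Wnoise_def Rsp_def S_def \<rho>_def by (rule shift_PiM[OF sig]) simp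
        have "(\<integral>\<^sup>+w. indicator A (Psi (x0, S v w)) \<partial>W) = (\<integral>\<^sup>+z. indicator A (Psi (x0, z)) \<partial>(distr W (Rsp T) (S v)))"
          using Fm[of x0] by (intro nn_integral_distr[symmetric] Sm) simp
        also have "\<dots> = (\<integral>\<^sup>+z. indicator A (Psi (x0, z)) \<partial>density W (\<rho> v))"
          unfolding sh ..
        also have "(\<integral>\<^sup>+z. indicator A (Psi (x0, z)) \<partial>density W (\<rho> v)) = (\<integral>\<^sup>+z. \<rho> v z * indicator A (Psi (x0, z)) \<partial>W)"
          by (rule nn_integral_density[OF rm]) (rule meas_transfer[OF Fm sW])
        finally show "(\<integral>\<^sup>+w. indicator A (Psi (x0, S v w)) \<partial>W) = (\<integral>\<^sup>+w. \<rho> v w * indicator A (Psi (x0, w)) \<partial>W)" .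
      qed
      also have "\<dots> = (\<integral>\<^sup>+p. \<rho> v (snd p) * indicator A (Psi p) \<partial>(m0 \<Otimes>\<^sub>M W))"
        using W.nn_integral_fst[OF f2m] by simp
      also have "\<dots> = (\<integral>\<^sup>+p. ennreal (D0 v (Psi p)) * indicator A (Psi p) \<partial>(m0 \<Otimes>\<^sub>M W))"
      proof (rule nn_integral_cong)
        fix p :: "real \<times> (nat \<Rightarrow> real)"
        have "\<rho> v (snd p) = ennreal (D0 v (Psi p))"
          unfolding \<rho>_def D0_def Psi_def lk_def by (rule rho_eq)
        then show "\<rho> v (snd p) * indicator A (Psi p) = ennreal (D0 v (Psi p)) * indicator A (Psi p)" by simp
      qed
      also have "\<dots> = (\<integral>\<^sup>+\<eta>. ennreal (D0 v \<eta>) * indicator A \<eta> \<partial>P)"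
      proof -
        have "(\<lambda>\<eta>. ennreal (D0 v \<eta>) * indicator A \<eta>) \<in> borel_measurable (Fsp T)"
        proof (rule borel_measurable_times_ennreal)
          show "(\<lambda>\<eta>. ennreal (D0 v \<eta>)) \<in> borel_measurable (Fsp T)"
            unfolding D0_def Fsp_def by measurable
          show "(\<lambda>\<eta>. indicator A \<eta>) \<in> borel_measurable (Fsp T)"
            using A by (rule borel_measurable_indicator)
        qed
        then show ?thesis unfolding Peq by (intro nn_integral_distr[symmetric] Psim) simp
      qed
      finally show ?thesis .
    qed
    have "emeasure (distr ?Q (Fsp T) G) A = (\<integral>\<^sup>+x. indicator A x \<partial>(distr ?Q (Fsp T) G))"
      using A by (intro nn_integral_indicator[symmetric]) simp
    also have "\<dots> = (\<integral>\<^sup>+q. indicator A (G q) \<partial>?Q)"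
      using A by (intro nn_integral_distr Gm) simp
    also have "\<dots> = (\<integral>\<^sup>+v. \<integral>\<^sup>+p. indicator A (G (p, v)) \<partial>(m0 \<Otimes>\<^sub>M W) \<partial>g)"
      using A Gm by (intro Qp.nn_integral_snd[symmetric]) simp
    also have "\<dots> = (\<integral>\<^sup>+v. \<integral>\<^sup>+\<eta>. ennreal (D0 v \<eta>) * indicator A \<eta> \<partial>P \<partial>g)"
      by (simp add: inner)
    also have "\<dots> = (\<integral>\<^sup>+\<eta>. \<integral>\<^sup>+v. ennreal (D0 v \<eta>) * indicator A \<eta> \<partial>g \<partial>P)"
    proof (rule Pg.Fubini')
      have m1: "(\<lambda>p. ennreal (D0 (snd p) (fst p))) \<in> borel_measurable (Fsp T \<Otimes>\<^sub>M Rsp T)"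
        unfolding D0_def by (rule D0_meas)
      have m2: "(\<lambda>p. indicator A (fst p) :: ennreal) \<in> borel_measurable (Fsp T \<Otimes>\<^sub>M Rsp T)"
        by (rule measurable_compose[OF measurable_fst borel_measurable_indicator[OF A]])
      have "(\<lambda>(\<eta>, v). ennreal (D0 v \<eta>) * indicator A \<eta>) \<in> borel_measurable (Fsp T \<Otimes>\<^sub>M Rsp T)"
        unfolding split_beta' by (rule borel_measurable_times_ennreal[OF m1 m2])
      then show "(\<lambda>(\<eta>, v). ennreal (D0 v \<eta>) * indicator A \<eta>) \<in> borel_measurable (P \<Otimes>\<^sub>M g)"
        by (rule meas_transfer) (rule sets_pair_measure_cong[OF sP gp(2)])
    qed
    also have "\<dots> = (\<integral>\<^sup>+\<eta>. ennreal (D \<eta>) * indicator A \<eta> \<partial>P)"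
    proof (intro nn_integral_cong)
      fix \<eta> :: "nat \<Rightarrow> real"
      have m: "(\<lambda>v. D0 v \<eta>) \<in> borel_measurable g"
        unfolding D0_def by (rule meas_transfer[OF D0_meas_real gp(2)])
      have int: "integrable g (\<lambda>v. D0 v \<eta>)"
      proof (rule g.integrable_const_bound[where B="exp ((1 / \<sigma>\<^sup>2) * (\<Sum>k\<in>{1..T}. (Phi M \<gamma> vth \<theta> \<eta> k)\<^sup>2 / 2))"])
        show "AE v in g. norm (D0 v \<eta>) \<le> exp ((1 / \<sigma>\<^sup>2) * (\<Sum>k\<in>{1..T}. (Phi M \<gamma> vth \<theta> \<eta> k)\<^sup>2 / 2))"
          unfolding D0_def using D0_bound[OF sig] by simp
      qed (rule m)
      have "(\<integral>\<^sup>+v. ennreal (D0 v \<eta>) * indicator A \<eta> \<partial>g) = (\<integral>\<^sup>+v. ennreal (D0 v \<eta>) \<partial>g) * indicator A \<eta>"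
        by (rule nn_integral_multc) (rule measurable_compose[OF m measurable_ennreal])
      also have "(\<integral>\<^sup>+v. ennreal (D0 v \<eta>) \<partial>g) = ennreal (D \<eta>)"
        unfolding D_def using int by (intro nn_integral_eq_integral) (auto simp: D0_def)
      finally show "(\<integral>\<^sup>+v. ennreal (D0 v \<eta>) * indicator A \<eta> \<partial>g) = ennreal (D \<eta>) * indicator A \<eta>" .
    qed
    also have "\<dots> = emeasure (density P (\<lambda>\<eta>. ennreal (D \<eta>))) A"
      using A sP by (intro emeasure_density[symmetric] Dm) simp
    finally show "emeasure (distr ?Q (Fsp T) G) A = emeasure (density P (\<lambda>\<eta>. ennreal (D \<eta>))) A" .
  qed

  have eq: "mf_prop M \<gamma> vth \<theta> \<sigma> Jbar J T \<mu> = density P (\<lambda>\<eta>. ennreal (D \<eta>))"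
    using mfeq main by simp
  have ac: "absolutely_continuous P (mf_prop M \<gamma> vth \<theta> \<sigma> Jbar J T \<mu>)"
    unfolding eq by (rule absolutely_continuousI_density[OF Dm])
  have "AE \<eta> in P. ennreal (D \<eta>) = RN_deriv P (mf_prop M \<gamma> vth \<theta> \<sigma> Jbar J T \<mu>) \<eta>"
    by (rule Pp.RN_deriv_unique[OF Dm eq[symmetric]])
  then have "AE \<eta> in P. RN_deriv P (mf_prop M \<gamma> vth \<theta> \<sigma> Jbar J T \<mu>) \<eta> = ennreal (D \<eta>)"
    by (auto elim: AE_mp)
  with ac show ?thesis unfolding P_def D_def D0_def g_def by simp
qed

end
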